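(* Let $n\ge2$ and let $w$ be a nonnegative lower semi-continuous function that is $n$-superharmonic in $B(0,2)\subset\mathbb{R}^n$ with $-\Delta_nw=\mu$ for a nonnegative Radon measure $\mu$, and let $\gamma^-=\liminf_{x\to0}\frac{w(x)}{\log\frac1{|x|}}$. Then for any fixed $\alpha\in(0,1)$, \[ \lim_{y\to0}\frac{\inf_{B(y,\alpha|y|)}w}{\log\frac1{|y|}}=\gamma^-. \]
   Context: $\Delta_n u=\mathrm{div}(|\nabla u|^{n-2}\nabla u)$. A lower semi-continuous $u:\Omega\to(-\infty,+\infty]$ is $n$-superharmonic in $\Omega$ if it is not identically $+\infty$ on any component and for every bounded open $D$ with $\bar D\subset\Omega$ and every $h\in C(\bar D)$ that is $n$-harmonic in $D$, $h\le u$ on $\partial D$ implies $h\le u$ in $D$; $-\Delta_nu=\mu$ means $\int|\nabla u|^{n-2}\nabla u\cdot\nabla\varphi=\int\varphi\,d\mu$ for $\varphi\in C_c^\infty(\Omega)$. *)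

theory Defs
  imports "HOL-Analysis.Analysis" "HOL-Probability.Probability"
begin

fun Ck :: "nat \<Rightarrow> ('a::euclidean_space \<Rightarrow> real) \<Rightarrow> bool" where
  "Ck 0 f = continuous_on UNIV f"
| "Ck (Suc k) f = (continuous_on UNIV f \<and> f differentiable_on UNIV \<and>
      (\<forall>i\<in>Basis. Ck k (\<lambda>x. frechet_derivative f (at x) i)))"

definition smooth :: "('a::euclidean_space \<Rightarrow> real) \<Rightarrow> bool" where
  "smooth f \<longleftrightarrow> (\<forall>k. Ck k f)"

definition test_fun :: "'a::euclidean_space set \<Rightarrow> ('a \<Rightarrow> real) \<Rightarrow> bool" where
  "test_fun D \<phi> \<longleftrightarrow> smooth \<phi> \<and> compact (closure {x. \<phi> x \<noteq> 0})
      \<and> closure {x. \<phi> x \<noteq> 0} \<subseteq> D"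

definition loc_integrable :: "'a::euclidean_space set \<Rightarrow> ('a \<Rightarrow> 'b::euclidean_space) \<Rightarrow> bool" where
  "loc_integrable D f \<longleftrightarrow> (\<forall>K. compact K \<and> K \<subseteq> D \<longrightarrow> f absolutely_integrable_on K)"

definition weak_gradient :: "'a::euclidean_space set \<Rightarrow> ('a \<Rightarrow> real) \<Rightarrow> ('a \<Rightarrow> 'a) \<Rightarrow> bool" where
  "weak_gradient D u g \<longleftrightarrow> loc_integrable D u \<and> loc_integrable D g \<and>
     (\<forall>\<phi>. test_fun D \<phi> \<longrightarrow> (\<forall>i\<in>Basis.
        integral D (\<lambda>x. u x * frechet_derivative \<phi> (at x) i)
          = - integral D (\<lambda>x. (g x \<bullet> i) * \<phi> x)))"

text \<open>n-harmonic in D (n = DIM('a)): weak solution in W^{1,n}_loc(D) of div(|grad h|^(n-2) grad h) = 0\<close>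
definition n_harmonic :: "'a::euclidean_space set \<Rightarrow> ('a \<Rightarrow> real) \<Rightarrow> bool" where
  "n_harmonic D h \<longleftrightarrow> continuous_on D h \<and> (\<exists>g. weak_gradient D h g \<and>
     loc_integrable D (\<lambda>x. \<bar>h x\<bar> ^ DIM('a)) \<and>
     loc_integrable D (\<lambda>x. norm (g x) ^ DIM('a)) \<and>
     (\<forall>\<phi>. test_fun D \<phi> \<longrightarrow>
        integral D (\<lambda>x. norm (g x) ^ (DIM('a) - 2) * frechet_derivative \<phi> (at x) (g x)) = 0))"

definition lsc_on :: "'a::topological_space set \<Rightarrow> ('a \<Rightarrow> ereal) \<Rightarrow> bool" where
  "lsc_on \<Omega> u \<longleftrightarrow> (\<forall>x\<in>\<Omega>. u x \<le> Liminf (at x within \<Omega>) u)"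

definition n_superharmonic :: "'a::euclidean_space set \<Rightarrow> ('a \<Rightarrow> ereal) \<Rightarrow> bool" where
  "n_superharmonic \<Omega> u \<longleftrightarrow>
     (\<forall>x\<in>\<Omega>. u x \<noteq> - \<infinity>) \<and> lsc_on \<Omega> u \<and>
     (\<forall>x\<in>\<Omega>. \<exists>y\<in>connected_component_set \<Omega> x. u y \<noteq> \<infinity>) \<and>
     (\<forall>D h. open D \<and> bounded D \<and> closure D \<subseteq> \<Omega> \<and>
        continuous_on (closure D) h \<and> n_harmonic D h \<and>
        (\<forall>x\<in>frontier D. ereal (h x) \<le> u x) \<longrightarrow> (\<forall>x\<in>D. ereal (h x) \<le> u x))"

definition radon_on :: "'a::euclidean_space set \<Rightarrow> 'a measure \<Rightarrow> bool" where
  "radon_on \<Omega> \<mu> \<longleftrightarrow> sets \<mu> = sets borel \<and>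
     (\<forall>K. compact K \<and> K \<subseteq> \<Omega> \<longrightarrow> emeasure \<mu> K < \<infinity>)"

definition neg_n_laplacian_eq :: "'a::euclidean_space set \<Rightarrow> ('a \<Rightarrow> ereal) \<Rightarrow> 'a measure \<Rightarrow> bool" where
  "neg_n_laplacian_eq \<Omega> u \<mu> \<longleftrightarrow> (\<exists>g. weak_gradient \<Omega> (\<lambda>x. real_of_ereal (u x)) g \<and>
     loc_integrable \<Omega> (\<lambda>x. norm (g x) ^ (DIM('a) - 1)) \<and>
     (\<forall>\<phi>. test_fun \<Omega> \<phi> \<longrightarrow>
        integral \<Omega> (\<lambda>x. norm (g x) ^ (DIM('a) - 2) * frechet_derivative \<phi> (at x) (g x))
          = integral\<^sup>L \<mu> \<phi>))"

end

theory Submission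
  imports Defs "HOL-Real_Asymp.Real_Asymp"
begin

lemma hi_univ:
  fixes f :: "'a::euclidean_space \<Rightarrow> 'b::banach"
  assumes "(f has_integral i) S" "\<And>x. x \<notin> S \<Longrightarrow> f x = 0"
  shows "(f has_integral i) UNIV"
proof -
  have "(\<lambda>x. if x \<in> S then f x else 0) = f" using assms(2) by auto
  then show ?thesis using assms(1) has_integral_restrict_UNIV[of S f i] by simp
qed

lemma hi_sub:
  fixes f :: "'a::euclidean_space \<Rightarrow> 'b::banach"
  assumes "(f has_integral i) UNIV" "\<And>x. x \<notin> S \<Longrightarrow> f x = 0"
  shows "(f has_integral i) S"
proof -
  have "(\<lambda>x. if x \<in> S then f x else 0) = f" using assms(2) by auto
  then show ?thesis using assms(1) has_integral_restrict_UNIV[of S f i] by simp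
qed

lemma ball_in_box:
  fixes x :: "'a::euclidean_space"
  assumes "norm x \<le> M"
  shows "x \<in> cbox (-(M *\<^sub>R One)) (M *\<^sub>R One)"
  using assms Basis_le_norm[of _ x] by (force simp: mem_box inner_sum_Basis abs_le_iff)

lemma ibp0:
  fixes \<psi> :: "'a::euclidean_space \<Rightarrow> real"
  assumes der: "\<And>x. (\<psi> has_derivative \<psi>' x) (at x)"
    and K: "compact K" and supp: "\<And>x. x \<notin> K \<Longrightarrow> \<psi> x = 0"
    and bnd: "\<And>x. \<bar>\<psi>' x v\<bar> \<le> B"
  shows "((\<lambda>x. \<psi>' x v) has_integral 0) UNIV"
proof -
  obtain R where R: "K \<subseteq> cball 0 R" "0 \<le> R"
    using compact_imp_bounded[OF K] unfolding bounded_iff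
    by (metis (no_types, lifting) mem_cball_0 norm_ge_zero order_trans subsetI)
  define M where "M = R + norm v + 1"
  define a :: 'a where "a = -(M *\<^sub>R One)"
  define b :: 'a where "b = M *\<^sub>R One"
  have Kin: "norm x \<le> R" if "x \<in> K" for x using R that by auto
  have cont: "continuous_on UNIV \<psi>"
    by (meson continuous_at_imp_continuous_on der has_derivative_continuous)
  have vdiff: "\<psi>' x v = 0" if "x \<notin> K" for x
  proof -
    have "open (- K)" using K compact_imp_closed by blast
    have "((\<lambda>_. 0) has_derivative (\<lambda>_. 0)) (at x)" by simp
    then have "(\<psi> has_derivative (\<lambda>_. 0)) (at x)"
      by (rule has_derivative_transform_within_open[OF _ \<open>open (- K)\<close>]) (use that supp in auto)
    then show ?thesis using has_derivative_unique[OF der[of x]] by metis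
  qed
  define I where "I = integral (cbox a b) \<psi>"
  have Iab: "(\<psi> has_integral I) (cbox a b)" unfolding I_def
      using integrable_continuous[OF continuous_on_subset[OF cont]] by blast
  have I0: "(\<psi> has_integral I) UNIV"
  proof (rule hi_univ)
    show "(\<psi> has_integral I) (cbox a b)" by (rule Iab)
    show "\<psi> x = 0" if "x \<notin> cbox a b" for x
    proof (rule supp)
      show "x \<notin> K"
      proof
        assume "x \<in> K" then have "norm x \<le> M" using Kin[of x] norm_ge_zero[of v] unfolding M_def by linarith
        then show False using that ball_in_box unfolding a_def b_def by blast
      qed
    qed
  qed
  have transl: "((\<lambda>x. \<psi> (c + x)) has_integral I) (cbox a b)" if c: "norm c \<le> norm v + 1" for c
  proof -
    have "(\<psi> has_integral I) (cbox (a + c) (b + c))"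
    proof (rule hi_sub[OF I0])
      show "\<psi> x = 0" if "x \<notin> cbox (a + c) (b + c)" for x
      proof (rule supp)
        show "x \<notin> K"
        proof
          assume "x \<in> K" then have "norm (x - c) \<le> M" using Kin[of x] c norm_triangle_ineq4[of x c] unfolding M_def by simp
          then have "x - c \<in> cbox a b" using ball_in_box unfolding a_def b_def by blast
          then have "x \<in> cbox (a + c) (b + c)"
            by (auto simp: mem_box inner_diff_left inner_add_left)
          then show False using that by blast
        qed
      qed
    qed
    then show ?thesis using has_integral_shift_cbox_iff[of \<psi> c I a b] by (simp add: o_def)
  qed
  define d :: "nat \<Rightarrow> real" where "d k = 1 / Suc k" for k
  have d: "0 < d k" "d k \<le> 1" for k unfolding d_def by auto
  define f where "f k x = (\<psi> (d k *\<^sub>R v + x) - \<psi> x) / d k" for k x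
  have linev: "((\<lambda>s. \<psi> (s *\<^sub>R v + x)) has_real_derivative \<psi>' (s *\<^sub>R v + x) v) (at s)" for x s
  proof -
    have "((\<lambda>s. s *\<^sub>R v + x) has_derivative (\<lambda>s. s *\<^sub>R v)) (at s)"
      by (auto intro!: derivative_eq_intros)
    from has_derivative_compose[OF this der]
    have "((\<lambda>s. \<psi> (s *\<^sub>R v + x)) has_derivative (\<lambda>t. \<psi>' (s *\<^sub>R v + x) (t *\<^sub>R v))) (at s)"
      by (simp add: o_def)
    moreover have "(\<lambda>t. \<psi>' (s *\<^sub>R v + x) (t *\<^sub>R v)) = (\<lambda>t. \<psi>' (s *\<^sub>R v + x) v * t)"
      using has_derivative_bounded_linear[OF der[of "s *\<^sub>R v + x"]]
      by (simp add: linear_simps(5) mult.commute)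
    ultimately show ?thesis by (simp add: has_field_derivative_def)
  qed
  have fint: "(f k has_integral 0) (cbox a b)" for k
  proof -
    have "d k * norm v \<le> 1 * norm v" using d[of k] by (intro mult_right_mono) auto
    then have "norm (d k *\<^sub>R v) \<le> norm v + 1" using d[of k] by simp
    from has_integral_diff[OF transl[OF this] Iab]
    have "((\<lambda>x. \<psi> (d k *\<^sub>R v + x) - \<psi> x) has_integral 0) (cbox a b)"
      by simp
    from has_integral_mult_right[OF this, of "1 / d k"]
    show ?thesis unfolding f_def by (simp add: divide_inverse mult.commute)
  qed
  have fbnd: "norm (f k x) \<le> B" for k x
  proof -
    obtain z where "0 < z" "z < d k"
      "\<psi> (d k *\<^sub>R v + x) - \<psi> (0 *\<^sub>R v + x) = (d k - 0) * \<psi>' (z *\<^sub>R v + x) v"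
      using MVT2[of 0 "d k" "\<lambda>s. \<psi> (s *\<^sub>R v + x)", OF d(1) linev] by blast
    then have "f k x = \<psi>' (z *\<^sub>R v + x) v" unfolding f_def using d(1)[of k] by simp
    then show ?thesis using bnd by simp
  qed
  have fconv: "(\<lambda>k. f k x) \<longlonglongrightarrow> \<psi>' x v" for x
  proof -
    have "((\<lambda>s. (\<psi> (s *\<^sub>R v + x) - \<psi> (0 *\<^sub>R v + x)) / (s - 0)) \<longlongrightarrow> \<psi>' (0 *\<^sub>R v + x) v) (at 0)"
      using linev[of x 0] unfolding has_field_derivative_iff by simp
    moreover have "d \<longlonglongrightarrow> 0" unfolding d_def using LIMSEQ_Suc[OF lim_const_over_n[of 1]]
      by simp
    moreover have "\<forall>i. d i \<in> UNIV - {0}" using d(1) by (metis DiffI UNIV_I less_irrefl singletonD)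
    ultimately have "((\<lambda>s. (\<psi> (s *\<^sub>R v + x) - \<psi> (0 *\<^sub>R v + x)) / (s - 0)) \<circ> d) \<longlonglongrightarrow> \<psi>' (0 *\<^sub>R v + x) v"
      using tendsto_at_iff_sequentially[THEN iffD1, rule_format] by blast
    then show ?thesis unfolding f_def o_def by simp
  qed
  have fi: "\<And>k. f k integrable_on cbox a b" using fint by blast
  note dc = dominated_convergence[of f "cbox a b" "\<lambda>_. B" "\<lambda>x. \<psi>' x v", OF fi integrable_const fbnd fconv]
  have "(\<lambda>k. integral (cbox a b) (f k)) = (\<lambda>_. 0)" using fint integral_unique by blast
  then have "integral (cbox a b) (\<lambda>x. \<psi>' x v) = 0"
    using dc(2) LIMSEQ_unique tendsto_const by metis
  then have "((\<lambda>x. \<psi>' x v) has_integral 0) (cbox a b)"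
    using has_integral_integral[of "\<lambda>x. \<psi>' x v" "cbox a b"] dc(1) by simp
  then show ?thesis
  proof (rule hi_univ)
    show "\<psi>' x v = 0" if "x \<notin> cbox a b" for x
    proof (rule vdiff)
      show "x \<notin> K"
      proof
        assume "x \<in> K" then have "norm x \<le> M" using Kin[of x] norm_ge_zero[of v] unfolding M_def by linarith
        then show False using that ball_in_box unfolding a_def b_def by blast
      qed
    qed
  qed
qed

lemma cont_compact_int:
  fixes f :: "'a::euclidean_space \<Rightarrow> 'b::euclidean_space"
  assumes "compact K" "continuous_on K f"
  shows "f integrable_on K"
proof -
  have "integrable lborel (\<lambda>x. indicator K x *\<^sub>R f x)" by (rule borel_integrable_compact[OF assms])
  then have "(\<lambda>x. indicator K x *\<^sub>R f x) integrable_on UNIV" by (rule integrable_on_lborel)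
  moreover have "(\<lambda>x. indicator K x *\<^sub>R f x) = (\<lambda>x. if x \<in> K then f x else 0)"
    by (auto simp: indicator_def)
  ultimately show ?thesis using integrable_restrict_UNIV by metis
qed

lemma cont_compact_absint:
  fixes f :: "'a::euclidean_space \<Rightarrow> 'b::euclidean_space"
  assumes "compact K" "continuous_on K f"
  shows "f absolutely_integrable_on K"
  unfolding absolutely_integrable_on_def
  by (intro conjI cont_compact_int[OF assms(1)] continuous_on_norm assms(2))

lemma cont_locint:
  fixes f :: "'a::euclidean_space \<Rightarrow> 'b::euclidean_space"
  assumes "continuous_on D f"
  shows "loc_integrable D f"
  unfolding loc_integrable_def
proof (intro allI impI)
  fix K assume K: "compact K \<and> K \<subseteq> D"
  then show "f absolutely_integrable_on K"
    by (intro cont_compact_absint) (auto intro: continuous_on_subset[OF assms])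
qed

lemma int_cs:
  fixes f :: "'a::euclidean_space \<Rightarrow> real"
  assumes "compact S" "S \<subseteq> D" "continuous_on D f" "\<And>x. x \<in> D \<Longrightarrow> x \<notin> S \<Longrightarrow> f x = 0"
  shows "f integrable_on D"
proof -
  have "f integrable_on S" using cont_compact_int[OF assms(1) continuous_on_subset[OF assms(3,2)]] .
  then have "(\<lambda>x. if x \<in> S then f x else 0) integrable_on UNIV" using integrable_restrict_UNIV by blast
  moreover have "(\<lambda>x. if x \<in> S then f x else 0) = (\<lambda>x. if x \<in> D then f x else 0)"
  proof
    fix x show "(if x \<in> S then f x else 0) = (if x \<in> D then f x else 0)"
      using assms(4)[of x] assms(2) by auto
  qed
  ultimately show ?thesis using integrable_restrict_UNIV by metis
qed

lemma lin_expand: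
  fixes f :: "'a::euclidean_space \<Rightarrow> real"
  assumes "linear f"
  shows "f u = (\<Sum>i\<in>Basis. (u \<bullet> i) * f i)"
proof -
  have "f u = f (\<Sum>i\<in>Basis. (u \<bullet> i) *\<^sub>R i)" by (simp add: euclidean_representation)
  also have "\<dots> = (\<Sum>i\<in>Basis. (u \<bullet> i) * f i)"
    using assms by (simp add: linear_sum linear_scale)
  finally show ?thesis .
qed

lemma test_facts:
  fixes \<phi> :: "'a::euclidean_space \<Rightarrow> real"
  assumes "test_fun D \<phi>"
  defines "S \<equiv> closure {x. \<phi> x \<noteq> 0}"
  shows "\<And>x. (\<phi> has_derivative frechet_derivative \<phi> (at x)) (at x)"
    and "continuous_on UNIV \<phi>"
    and "\<And>i. i \<in> Basis \<Longrightarrow> continuous_on UNIV (\<lambda>x. frechet_derivative \<phi> (at x) i)"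
    and "compact S" "S \<subseteq> D"
    and "\<And>x. x \<notin> S \<Longrightarrow> \<phi> x = 0"
    and "\<And>x. x \<notin> S \<Longrightarrow> frechet_derivative \<phi> (at x) = (\<lambda>_. 0)"
proof -
  have sm: "smooth \<phi>" and cS: "compact S" and SD: "S \<subseteq> D"
    using assms(1) unfolding test_fun_def S_def by blast+
  have C1: "Ck (Suc 0) \<phi>" using sm unfolding smooth_def by blast
  then have C1': "continuous_on UNIV \<phi> \<and> \<phi> differentiable_on UNIV \<and>
     (\<forall>i\<in>Basis. continuous_on UNIV (\<lambda>x. frechet_derivative \<phi> (at x) i))"
    using C1 unfolding Ck.simps by blast
  then have dif: "\<phi> differentiable_on UNIV" and cont: "continuous_on UNIV \<phi>"
    and pc: "\<And>i. i \<in> Basis \<Longrightarrow> continuous_on UNIV (\<lambda>x. frechet_derivative \<phi> (at x) i)"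
    by blast+
  show der: "(\<phi> has_derivative frechet_derivative \<phi> (at x)) (at x)" for x
  proof -
    have "\<phi> differentiable (at x)" using dif unfolding differentiable_on_def by blast
    then show ?thesis using frechet_derivative_works by blast
  qed
  show "continuous_on UNIV \<phi>" by (rule cont)
  show "continuous_on UNIV (\<lambda>x. frechet_derivative \<phi> (at x) i)" if "i \<in> Basis" for i using pc that .
  show "compact S" by (rule cS)
  show "S \<subseteq> D" by (rule SD)
  show z: "\<phi> x = 0" if "x \<notin> S" for x
  proof (rule ccontr)
    assume "\<phi> x \<noteq> 0"
    then have "x \<in> {x. \<phi> x \<noteq> 0}" by simp
    then have "x \<in> S" unfolding S_def using closure_subset by (rule subsetD[rotated])
    then show False using that by simp
  qed
  show "frechet_derivative \<phi> (at x) = (\<lambda>_. 0)" if "x \<notin> S" for x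
  proof -
    have "open (- S)" unfolding S_def by (simp add: open_Compl)
    have "((\<lambda>_. 0) has_derivative (\<lambda>_. 0)) (at x)" by simp
    then have "(\<phi> has_derivative (\<lambda>_. 0)) (at x)"
      by (rule has_derivative_transform_within_open[OF _ \<open>open (- S)\<close>]) (use that z in auto)
    then show ?thesis using has_derivative_unique[OF der[of x]] by metis
  qed
qed

lemma ibp_test:
  fixes \<phi> h :: "'a::euclidean_space \<Rightarrow> real"
  assumes D: "open D" and T: "test_fun D \<phi>" and v: "v \<in> Basis"
   and hder: "\<And>x. x \<in> D \<Longrightarrow> (h has_derivative h' x) (at x)"
   and hc: "continuous_on D h" and hc': "continuous_on D (\<lambda>x. h' x v)"
  shows "((\<lambda>x. h x * frechet_derivative \<phi> (at x) v + h' x v * \<phi> x) has_integral 0) D"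
proof -
  define S where "S = closure {x. \<phi> x \<noteq> 0}"
  note tf = test_facts[OF T, folded S_def]
  define \<psi> where "\<psi> x = (if x \<in> D then h x * \<phi> x else 0)" for x
  define \<psi>' where "\<psi>' x = (if x \<in> D then (\<lambda>u. h x * frechet_derivative \<phi> (at x) u + h' x u * \<phi> x) else (\<lambda>u. 0))" for x
  define F where "F x = h x * frechet_derivative \<phi> (at x) v + h' x v * \<phi> x" for x
  have oS: "open (-S)" unfolding S_def by (simp add: open_Compl)
  have der: "(\<psi> has_derivative \<psi>' x) (at x)" for x
  proof (cases "x \<in> D")
    case True
    have "((\<lambda>x. h x * \<phi> x) has_derivative (\<lambda>u. h x * frechet_derivative \<phi> (at x) u + h' x u * \<phi> x)) (at x)"
      using has_derivative_mult[OF hder[OF True] tf(1)[of x]] by simp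
    then have "(\<psi> has_derivative (\<lambda>u. h x * frechet_derivative \<phi> (at x) u + h' x u * \<phi> x)) (at x)"
      by (rule has_derivative_transform_within_open[OF _ D True]) (simp add: \<psi>_def)
    then show ?thesis using True by (simp add: \<psi>'_def)
  next
    case False
    then have xS: "x \<notin> S" using tf(5) by blast
    have "((\<lambda>_. 0) has_derivative (\<lambda>_. 0)) (at x)" by simp
    then have "(\<psi> has_derivative (\<lambda>_. 0)) (at x)"
      by (rule has_derivative_transform_within_open[OF _ oS]) (use xS tf(6) in \<open>auto simp: \<psi>_def\<close>)
    then show ?thesis using False by (simp add: \<psi>'_def)
  qed
  have supp: "\<psi> x = 0" if "x \<notin> S" for x using tf(6)[OF that] by (simp add: \<psi>_def)
  have Fc: "continuous_on D F" unfolding F_def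
    by (intro continuous_intros hc hc' continuous_on_subset[OF tf(2)] continuous_on_subset[OF tf(3)[OF v]]) auto
  obtain B where B0: "B \<ge> 0" and B: "\<And>x. x \<in> S \<Longrightarrow> norm (F x) \<le> B"
    using continuous_on_compact_bound[OF tf(4) continuous_on_subset[OF Fc tf(5)]] by metis
  have FS: "F x = 0" if "x \<notin> S" for x using tf(6)[OF that] tf(7)[OF that] by (simp add: F_def)
  have bnd: "\<bar>\<psi>' x v\<bar> \<le> B" for x
  proof (cases "x \<in> D")
    case True
    then have "\<psi>' x v = F x" by (simp add: \<psi>'_def F_def)
    then show ?thesis using B[of x] FS[of x] B0 by (cases "x \<in> S") auto
  next
    case False then show ?thesis using B0 by (simp add: \<psi>'_def)
  qed
  have "((\<lambda>x. \<psi>' x v) has_integral 0) UNIV" by (rule ibp0[OF der tf(4) supp bnd])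
  moreover have "(\<lambda>x. \<psi>' x v) = (\<lambda>x. if x \<in> D then F x else 0)"
    by (auto simp: \<psi>'_def F_def)
  ultimately have "(F has_integral 0) D" using has_integral_restrict_UNIV[of D F 0] by simp
  then show ?thesis unfolding F_def .
qed

lemma der_norm:
  fixes y :: "'a::euclidean_space"
  assumes "x \<noteq> y"
  shows "((\<lambda>x. norm (x - y)) has_derivative (\<lambda>u. ((x - y) \<bullet> u) / norm (x - y))) (at x)"
proof -
  have d1: "((\<lambda>x. x - y) has_derivative (\<lambda>u. u)) (at x)" by (auto intro!: derivative_eq_intros)
  have d2: "(norm has_derivative (\<lambda>h. h \<bullet> sgn (x - y))) (at (x - y))"
    using has_derivative_norm[of "x - y"] assms by simp
  have "((\<lambda>x. norm (x - y)) has_derivative (\<lambda>h. h \<bullet> sgn (x - y))) (at x)"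
    using has_derivative_compose[OF d1 d2] by simp
  then show ?thesis by (simp add: sgn_div_norm inner_commute divide_inverse mult.commute)
qed

lemma der_log:
  fixes y :: "'a::euclidean_space"
  assumes "x \<noteq> y"
  shows "((\<lambda>x. A * ln (norm (x - y)) + B) has_derivative (\<lambda>u. (A / norm (x - y) ^ 2) * ((x - y) \<bullet> u))) (at x)"
proof -
  have np: "norm (x - y) > 0" using assms by simp
  note dn = der_norm[OF assms]
  show ?thesis
    apply (rule has_derivative_eq_rhs)
     apply (auto intro!: derivative_eq_intros dn simp: assms)[1]
    apply (rule ext)
    using np by (auto simp: field_simps power2_eq_square)
qed

lemma der_F:
  fixes y :: "'a::euclidean_space"
  assumes "x \<noteq> y"
  shows "((\<lambda>x. ((x - y) \<bullet> i) / norm (x - y) ^ n) has_derivative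
     (\<lambda>u. (u \<bullet> i) / norm (x - y) ^ n - real n * ((x - y) \<bullet> i) * ((x - y) \<bullet> u) / norm (x - y) ^ (n + 2))) (at x)"
proof -
  have np: "norm (x - y) > 0" using assms by simp
  note dn = der_norm[OF assms]
  show ?thesis
    apply (rule has_derivative_eq_rhs)
     apply (auto intro!: derivative_eq_intros dn simp: assms)[1]
    apply (rule ext)
    using np by (cases n) (auto simp: field_simps)
qed

lemma divF:
  fixes z :: "'a::euclidean_space"
  assumes "z \<noteq> 0"
  shows "(\<Sum>i\<in>(Basis::'a set). (i \<bullet> i) / norm z ^ DIM('a) - real DIM('a) * (z \<bullet> i) * (z \<bullet> i) / norm z ^ (DIM('a) + 2)) = 0"
proof -
  have np: "norm z > 0" using assms by simp
  have "(\<Sum>i\<in>(Basis::'a set). (i \<bullet> i) / norm z ^ DIM('a) - real DIM('a) * (z \<bullet> i) * (z \<bullet> i) / norm z ^ (DIM('a) + 2))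
     = (\<Sum>i\<in>(Basis::'a set). 1 / norm z ^ DIM('a)) - real DIM('a) / norm z ^ (DIM('a) + 2) * (\<Sum>i\<in>(Basis::'a set). (z \<bullet> i) * (z \<bullet> i))"
    by (simp add: sum_subtractf sum_distrib_left inner_Basis mult.assoc)
  also have "(\<Sum>i\<in>(Basis::'a set). (z \<bullet> i) * (z \<bullet> i)) = norm z ^ 2"
    using euclidean_inner[of z z] by (simp add: power2_norm_eq_inner)
  also have "(\<Sum>i\<in>(Basis::'a set). 1 / norm z ^ DIM('a)) = real DIM('a) / norm z ^ DIM('a)" by simp
  also have "real DIM('a) / norm z ^ DIM('a) - real DIM('a) / norm z ^ (DIM('a) + 2) * norm z ^ 2 = 0"
    using np by (simp add: power_add power2_eq_square)
  finally show ?thesis .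
qed

lemma log_nharm:
  fixes y :: "'a::euclidean_space" and A B :: real
  assumes n2: "DIM('a) \<ge> 2" and D: "open D" and yD: "y \<notin> D"
  shows "n_harmonic D (\<lambda>x. A * ln (norm (x - y)) + B)"
proof -
  define n where "n = DIM('a)"
  define h where "h x = A * ln (norm (x - y)) + B" for x
  define g where "g x = (A / norm (x - y)^2) *\<^sub>R (x - y)" for x
  have hh: "(\<lambda>x. A * ln (norm (x - y)) + B) = h" by (rule ext) (simp add: h_def)
  have xy: "x \<noteq> y" if "x \<in> D" for x using that yD by auto
  have hc: "continuous_on D h" unfolding h_def
    by (intro continuous_intros) (auto dest: xy)
  have gc: "continuous_on D g" unfolding g_def
    by (intro continuous_intros) (auto dest: xy)
  have hder: "(h has_derivative (\<lambda>u. (A / norm (x - y)^2) * ((x - y) \<bullet> u))) (at x)" if "x \<in> D" for x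
    unfolding h_def using der_log[OF xy[OF that]] .
  have wg: "weak_gradient D h g"
    unfolding weak_gradient_def
  proof (intro conjI allI impI ballI)
    show "loc_integrable D h" by (rule cont_locint[OF hc])
    show "loc_integrable D g" by (rule cont_locint[OF gc])
    fix \<phi> :: "'a \<Rightarrow> real" and i :: 'a assume T: "test_fun D \<phi>" and i: "i \<in> Basis"
    define S where "S = closure {x. \<phi> x \<noteq> 0}"
    note tf = test_facts[OF T, folded S_def]
    have "((\<lambda>x. h x * frechet_derivative \<phi> (at x) i + (A / norm (x - y)^2) * ((x - y) \<bullet> i) * \<phi> x) has_integral 0) D"
    proof (rule ibp_test[OF D T i _ hc])
      show "(h has_derivative (\<lambda>u. (A / norm (x - y)^2) * ((x - y) \<bullet> u))) (at x)" if "x \<in> D" for x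
        using hder[OF that] .
      show "continuous_on D (\<lambda>x. A / (norm (x - y))\<^sup>2 * ((x - y) \<bullet> i))"
        by (intro continuous_intros) (auto dest: xy)
    qed
    then have tot: "((\<lambda>x. h x * frechet_derivative \<phi> (at x) i + (g x \<bullet> i) * \<phi> x) has_integral 0) D"
      by (simp add: g_def)
    have gic: "continuous_on D (\<lambda>x. (g x \<bullet> i) * \<phi> x)"
      by (intro continuous_intros gc continuous_on_subset[OF tf(2)]) auto
    have t2: "(\<lambda>x. (g x \<bullet> i) * \<phi> x) integrable_on D"
      by (rule int_cs[OF tf(4) tf(5) gic]) (simp add: tf(6))
    then obtain I2 where I2: "((\<lambda>x. (g x \<bullet> i) * \<phi> x) has_integral I2) D" by blast
    have "((\<lambda>x. h x * frechet_derivative \<phi> (at x) i) has_integral (0 - I2)) D"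
      using has_integral_diff[OF tot I2] by simp
    then show "integral D (\<lambda>x. h x * frechet_derivative \<phi> (at x) i) = - integral D (\<lambda>x. (g x \<bullet> i) * \<phi> x)"
      using I2 integral_unique by auto
  qed
  have eqn: "integral D (\<lambda>x. norm (g x) ^ (DIM('a) - 2) * frechet_derivative \<phi> (at x) (g x)) = 0"
    if T: "test_fun D \<phi>" for \<phi>
  proof -
    define S where "S = closure {x. \<phi> x \<noteq> 0}"
    note tf = test_facts[OF T, folded S_def]
    define F where "F i x = ((x - y) \<bullet> i) / norm (x - y) ^ n" for i x
    define F' where "F' i x = (\<lambda>u. (u \<bullet> i) / norm (x - y) ^ n - real n * ((x - y) \<bullet> i) * ((x - y) \<bullet> u) / norm (x - y) ^ (n + 2))" for i x
    have each: "((\<lambda>x. F i x * frechet_derivative \<phi> (at x) i + F' i x i * \<phi> x) has_integral 0) D"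
      if i: "i \<in> Basis" for i
    proof (rule ibp_test[OF D T i, where h="F i" and h'="F' i"])
      show "(F i has_derivative F' i x) (at x)" if "x \<in> D" for x
        unfolding F_def[abs_def] F'_def using der_F[OF xy[OF that]] by simp
      show "continuous_on D (F i)" unfolding F_def[abs_def]
        by (intro continuous_intros) (auto dest: xy)
      show "continuous_on D (\<lambda>x. F' i x i)" unfolding F'_def
        by (intro continuous_intros) (auto dest: xy)
    qed
    have "((\<lambda>x. \<Sum>i\<in>(Basis::'a set). F i x * frechet_derivative \<phi> (at x) i + F' i x i * \<phi> x) has_integral (\<Sum>i\<in>(Basis::'a set). 0)) D"
      by (rule has_integral_sum[OF finite_Basis each])
    then have sum0: "((\<lambda>x. \<Sum>i\<in>(Basis::'a set). F i x * frechet_derivative \<phi> (at x) i + F' i x i * \<phi> x) has_integral 0) D"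
      by simp
    have pt1: "(\<Sum>i\<in>(Basis::'a set). F i x * frechet_derivative \<phi> (at x) i + F' i x i * \<phi> x)
             = (\<Sum>i\<in>(Basis::'a set). F i x * frechet_derivative \<phi> (at x) i)" if "x \<in> D" for x
    proof -
      have "(\<Sum>i\<in>(Basis::'a set). F' i x i) = 0"
        unfolding F'_def n_def using divF[of "x - y"] xy[OF that] by (simp add: mult.assoc)
      then have "(\<Sum>i\<in>(Basis::'a set). F' i x i * \<phi> x) = 0" by (simp add: sum_distrib_right[symmetric])
      then show ?thesis by (simp add: sum.distrib)
    qed
    define c where "c = \<bar>A\<bar> ^ (n - 2) * A"
    have pt2: "norm (g x) ^ (DIM('a) - 2) * frechet_derivative \<phi> (at x) (g x)
             = c * (\<Sum>i\<in>(Basis::'a set). F i x * frechet_derivative \<phi> (at x) i)" if "x \<in> D" for x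
    proof -
      define z where "z = x - y"
      have nz: "norm z > 0" using xy[OF that] unfolding z_def by simp
      have lin: "linear (frechet_derivative \<phi> (at x))"
        using has_derivative_bounded_linear[OF tf(1)[of x]] bounded_linear.linear by blast
      have ng: "norm (g x) = \<bar>A\<bar> / norm z"
        using nz unfolding g_def z_def[symmetric] by (simp add: power2_eq_square)
      have pw: "norm z ^ n = norm z ^ (n - 2) * norm z ^ 2"
      proof -
        have "n = (n - 2) + 2" using n2 unfolding n_def by simp
        then show ?thesis by (metis power_add)
      qed
      have "frechet_derivative \<phi> (at x) (g x) = (\<Sum>i\<in>(Basis::'a set). (g x \<bullet> i) * frechet_derivative \<phi> (at x) i)"
        by (rule lin_expand[OF lin])
      also have "\<dots> = (\<Sum>i\<in>(Basis::'a set). (A / norm z ^ 2) * (z \<bullet> i) * frechet_derivative \<phi> (at x) i)"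
        unfolding g_def z_def by simp
      finally have e1: "frechet_derivative \<phi> (at x) (g x) = (\<Sum>i\<in>(Basis::'a set). (A / norm z ^ 2) * (z \<bullet> i) * frechet_derivative \<phi> (at x) i)" .
      have "norm (g x) ^ (DIM('a) - 2) * frechet_derivative \<phi> (at x) (g x)
         = (\<Sum>i\<in>(Basis::'a set). (\<bar>A\<bar> / norm z) ^ (n - 2) * ((A / norm z ^ 2) * (z \<bullet> i) * frechet_derivative \<phi> (at x) i))"
        unfolding e1 ng n_def by (simp add: sum_distrib_left)
      also have "\<dots> = (\<Sum>i\<in>(Basis::'a set). c * (F i x * frechet_derivative \<phi> (at x) i))"
      proof (rule sum.cong[OF refl])
        fix i :: 'a
        show "(\<bar>A\<bar> / norm z) ^ (n - 2) * ((A / norm z ^ 2) * (z \<bullet> i) * frechet_derivative \<phi> (at x) i)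
           = c * (F i x * frechet_derivative \<phi> (at x) i)"
          unfolding c_def F_def z_def[symmetric] pw using nz by (simp add: field_simps power_divide)
      qed
      also have "\<dots> = c * (\<Sum>i\<in>(Basis::'a set). F i x * frechet_derivative \<phi> (at x) i)"
        by (simp add: sum_distrib_left)
      finally show ?thesis .
    qed
    have "integral D (\<lambda>x. norm (g x) ^ (DIM('a) - 2) * frechet_derivative \<phi> (at x) (g x))
        = integral D (\<lambda>x. c * (\<Sum>i\<in>(Basis::'a set). F i x * frechet_derivative \<phi> (at x) i + F' i x i * \<phi> x))"
      using pt1 pt2 by (intro integral_cong) simp
    also have "\<dots> = c * integral D (\<lambda>x. \<Sum>i\<in>(Basis::'a set). F i x * frechet_derivative \<phi> (at x) i + F' i x i * \<phi> x)"
      by (rule integral_mult_right)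
    also have "\<dots> = 0" using integral_unique[OF sum0] by simp
    finally show ?thesis .
  qed
  show ?thesis unfolding hh n_harmonic_def
  proof (intro conjI exI[of _ g] allI impI hc wg)
    show "loc_integrable D (\<lambda>x. \<bar>h x\<bar> ^ DIM('a))"
      by (rule cont_locint) (intro continuous_intros hc)
    show "loc_integrable D (\<lambda>x. norm (g x) ^ DIM('a))"
      by (rule cont_locint) (intro continuous_intros gc)
    show "integral D (\<lambda>x. norm (g x) ^ (DIM('a) - 2) * frechet_derivative \<phi> (at x) (g x)) = 0"
      if "test_fun D \<phi>" for \<phi> using eqn[OF that] .
  qed
qed

lemma barrier:
  fixes w :: "'a::euclidean_space \<Rightarrow> ereal" and y x0 :: 'a
  assumes n2: "DIM('a) \<ge> 2" and sh: "n_superharmonic (ball 0 2) w"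
    and w0: "\<forall>x\<in>ball 0 2. w x \<ge> 0"
    and \<rho>: "0 < \<rho>" "\<rho> < 1" and y: "norm y < 1" and L: "0 \<le> L"
    and Lb: "\<And>x. x \<in> cball y \<rho> \<Longrightarrow> ereal L \<le> w x"
    and x0: "\<rho> < norm (x0 - y)" "norm (x0 - y) < 1"
  shows "ereal (L * ln (1 / norm (x0 - y)) / ln (1 / \<rho>)) \<le> w x0"
proof -
  define D where "D = ball y 1 - cball y \<rho>"
  define A where "A = - L / ln (1 / \<rho>)"
  define h where "h x = A * ln (norm (x - y)) + 0" for x
  have lnr: "ln (1 / \<rho>) > 0" using \<rho> by simp
  have hform: "h x = L * ln (1 / norm (x - y)) / ln (1 / \<rho>)" if "x \<noteq> y" for x
    using that by (simp add: h_def A_def ln_div)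
  have memD: "x \<in> D \<longleftrightarrow> \<rho> < norm (x - y) \<and> norm (x - y) < 1" for x
    by (auto simp: D_def dist_norm norm_minus_commute)
  have oD: "open D" unfolding D_def by (simp add: open_Diff)
  have bD: "bounded D" unfolding D_def by (meson bounded_ball bounded_subset Diff_subset)
  have yD: "y \<notin> D" using memD[of y] \<rho> by simp
  have cl: "closure D \<subseteq> cball y 1 - ball y \<rho>"
    by (rule closure_minimal) (auto simp: D_def closed_Diff)
  have memcl: "\<rho> \<le> norm (x - y) \<and> norm (x - y) \<le> 1" if "x \<in> closure D" for x
    using cl that by (auto simp: dist_norm norm_minus_commute)
  have clB: "closure D \<subseteq> ball 0 2"
  proof
    fix x assume "x \<in> closure D"
    then have "norm (x - y) \<le> 1" using memcl by blast
    then have "norm x < 2" using y norm_triangle_ineq2[of x y] by linarith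
    then show "x \<in> ball 0 2" by simp
  qed
  have hc: "continuous_on (closure D) h" unfolding h_def
    by (intro continuous_intros) (use memcl \<rho> in fastforce)
  have nh: "n_harmonic D h" unfolding h_def[abs_def] by (rule log_nharm[OF n2 oD yD])
  have fr: "ereal (h x) \<le> w x" if "x \<in> frontier D" for x
  proof -
    have xc: "x \<in> closure D" and xn: "x \<notin> D" using that oD by (auto simp: frontier_def interior_open)
    have m: "\<rho> \<le> norm (x - y)" "norm (x - y) \<le> 1" using memcl[OF xc] by auto
    have xy: "x \<noteq> y" using m \<rho> by auto
    have xB: "x \<in> ball 0 2" using clB xc by blast
    consider "norm (x - y) = \<rho>" | "norm (x - y) = 1" using m xn memD[of x] by linarith
    then show ?thesis
    proof cases
      case 1
      then have "h x = L" using hform[OF xy] lnr by simp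
      moreover have "x \<in> cball y \<rho>" using 1 by (simp add: dist_norm norm_minus_commute)
      ultimately show ?thesis using Lb by simp
    next
      case 2
      then have "h x = 0" using hform[OF xy] by simp
      then show ?thesis using w0 xB by (simp add: zero_ereal_def[symmetric])
    qed
  qed
  have "\<forall>x\<in>D. ereal (h x) \<le> w x"
    using sh oD bD cl clB hc nh fr unfolding n_superharmonic_def by blast
  moreover have "x0 \<in> D" using memD x0 by blast
  moreover have "x0 \<noteq> y" using x0 \<rho> by auto
  ultimately have "ereal (h x0) \<le> w x0" by blast
  moreover have "h x0 = L * ln (1 / norm (x0 - y)) / ln (1 / \<rho>)" using hform \<open>x0 \<noteq> y\<close> by blast
  ultimately show ?thesis by simp
qed

lemma ev_at0:
  fixes P :: "'a::real_normed_vector \<Rightarrow> bool"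
  assumes "d > 0" "\<And>y. 0 < norm y \<Longrightarrow> norm y < d \<Longrightarrow> P y"
  shows "eventually P (at 0)"
  unfolding eventually_at using assms by (auto simp: dist_norm)

lemma ev_at0D:
  fixes P :: "'a::real_normed_vector \<Rightarrow> bool"
  assumes "eventually P (at 0)"
  obtains d where "d > 0" "\<And>y. 0 < norm y \<Longrightarrow> norm y < d \<Longrightarrow> P y"
  using assms unfolding eventually_at by (auto simp: dist_norm)

lemma ball_bounds:
  fixes y x :: "'a::real_normed_vector"
  assumes "x \<in> ball y (\<alpha> * norm y)" "\<alpha> < 1"
  shows "norm x < (1 + \<alpha>) * norm y" "(1 - \<alpha>) * norm y < norm x"
proof -
  have d: "norm (y - x) < \<alpha> * norm y" using assms by (simp add: dist_norm)
  show "norm x < (1 + \<alpha>) * norm y" using d norm_triangle_ineq2[of x y] norm_minus_commute[of x y]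
    by (simp add: algebra_simps)
  show "(1 - \<alpha>) * norm y < norm x" using d norm_triangle_ineq2[of y x]
    by (simp add: algebra_simps)
qed

lemma ln_inv_pos: "0 < r \<Longrightarrow> r < 1 \<Longrightarrow> ln (1 / r) > (0::real)"
  by (simp add: ln_div)

theorem lemma3p7:
  fixes w :: "'a::euclidean_space \<Rightarrow> ereal" and \<mu> :: "'a measure" and \<alpha> :: real
  assumes "DIM('a) \<ge> 2"
    and "\<forall>x\<in>ball 0 2. w x \<ge> 0"
    and "n_superharmonic (ball 0 2) w"
    and "radon_on (ball 0 2) \<mu>"
    and "neg_n_laplacian_eq (ball 0 2) w \<mu>"
    and "0 < \<alpha>" and "\<alpha> < 1"
  shows "((\<lambda>y. (INF x\<in>ball y (\<alpha> * norm y). w x) / ereal (ln (1 / norm y)))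
           \<longlongrightarrow> Liminf (at 0) (\<lambda>x. w x / ereal (ln (1 / norm x)))) (at 0)"
proof -
  note n2 = assms(1) and w0 = assms(2) and sh = assms(3) and \<alpha> = assms(6,7)
  define t :: "'a \<Rightarrow> real" where "t y = ln (1 / norm y)" for y
  define I where "I y = (INF x\<in>ball y (\<alpha> * norm y). w x)" for y
  define f where "f x = w x / ereal (t x)" for x
  define \<gamma> where "\<gamma> = Liminf (at 0) f"
  have tpos: "t y > 0" if "0 < norm y" "norm y < 1" for y
    unfolding t_def using ln_inv_pos that by blast
  have wB: "w x \<ge> 0" if "norm x < 2" for x using w0 that by simp
  have \<gamma>0: "0 \<le> \<gamma>"
    unfolding \<gamma>_def
  proof (rule Liminf_bounded, rule ev_at0[of 1])
    fix y :: 'a assume "0 < norm y" "norm y < 1"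
    moreover have "t y > 0" using tpos \<open>0 < norm y\<close> \<open>norm y < 1\<close> by blast
    moreover have "w y \<ge> 0" using wB \<open>norm y < 1\<close> by simp
    ultimately show "0 \<le> f y" unfolding f_def by simp
  qed simp
  have main: "((\<lambda>y. I y / ereal (t y)) \<longlongrightarrow> \<gamma>) (at 0)"
  proof (rule order_tendstoI)
    fix a assume a: "a < \<gamma>"
    show "eventually (\<lambda>y. a < I y / ereal (t y)) (at 0)"
    proof (cases "a < 0")
      case True
      show ?thesis
      proof (rule ev_at0[of "1/2"])
        fix y :: 'a assume y: "0 < norm y" "norm y < 1/2"
        have "0 \<le> I y" unfolding I_def
        proof (rule INF_greatest)
          fix x assume "x \<in> ball y (\<alpha> * norm y)"
          then have "norm x < (1 + \<alpha>) * norm y" using ball_bounds \<alpha> by blast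
          also have "\<dots> \<le> 2 * norm y" using \<alpha> y by (intro mult_right_mono) auto
          also have "\<dots> < 2" using y by simp
          finally show "0 \<le> w x" using wB by simp
        qed
        then have "0 \<le> I y / ereal (t y)" using tpos[of y] y by simp
        then show "a < I y / ereal (t y)" using True by simp
      qed simp
    next
      case False
      then have a0: "0 \<le> a" by simp
      obtain a' where a': "a < ereal a'" "ereal a' < \<gamma>" using ereal_dense2[OF a] by blast
      obtain ar where ar: "a = ereal ar" using a0 a'(1) by (cases a) auto
      have ar0: "0 \<le> ar" "ar < a'" using a0 a'(1) ar by auto
      have "eventually (\<lambda>x. ereal a' < f x) (at 0)" using less_LiminfD a'(2) unfolding \<gamma>_def by blast
      then obtain d1 where d1: "d1 > 0" "\<And>x. 0 < norm x \<Longrightarrow> norm x < d1 \<Longrightarrow> ereal a' < f x"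
        using ev_at0D by metis
      define c where "c = ln (1 + \<alpha>)"
      have c0: "c > 0" unfolding c_def using \<alpha> by simp
      define K where "K = a' * c / (a' - ar)"
      define d where "d = min (1/2) (min (d1 / 2) (exp (- K)))"
      have d0: "d > 0" unfolding d_def using d1 by simp
      show ?thesis
      proof (rule ev_at0[OF d0])
        fix y :: 'a assume y: "0 < norm y" "norm y < d"
        have y2: "norm y < 1/2" "norm y < d1 / 2" "norm y < exp (- K)" using y unfolding d_def by auto
        have tK: "t y > K"
        proof -
          have "ln (norm y) < ln (exp (- K))" using y y2 by (subst ln_less_cancel_iff) auto
          then show ?thesis unfolding t_def using y(1) by (simp add: ln_div)
        qed
        have lowx: "ereal (a' * (t y - c)) \<le> w x" if x: "x \<in> ball y (\<alpha> * norm y)" for x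
        proof -
          have xb: "norm x < (1 + \<alpha>) * norm y" "(1 - \<alpha>) * norm y < norm x"
            using ball_bounds[OF x \<alpha>(2)] by auto
          have "(1 + \<alpha>) * norm y \<le> 2 * norm y" using \<alpha> y by (intro mult_right_mono) auto
          then have xs: "norm x < 2 * norm y" using xb by linarith
          have xp: "0 < norm x" using xb(2) \<alpha> y by (smt (verit) mult_pos_pos)
          have x1: "norm x < 1" "norm x < d1" using xs y2 by auto
          have tx: "t x > 0" using tpos xp x1 by blast
          have "ereal a' < w x / ereal (t x)" using d1(2)[OF xp x1(2)] unfolding f_def .
          then have "ereal a' * ereal (t x) < w x" using tx by (subst (asm) ereal_less_divide_iff) auto
          then have A: "ereal (a' * t x) < w x" by simp
          have "t y - c \<le> t x"
          proof -
            have "t y - c = ln (1 / ((1 + \<alpha>) * norm y))"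
              unfolding t_def c_def using y \<alpha> by (simp add: ln_div ln_mult)
            also have "\<dots> \<le> ln (1 / norm x)"
            proof (rule ln_mono)
              have p: "0 < (1 + \<alpha>) * norm y" using \<alpha> y by simp
              show "1 / ((1 + \<alpha>) * norm y) \<le> 1 / norm x"
                using xb(1) xp p by (intro divide_left_mono) auto
              show "0 < 1 / ((1 + \<alpha>) * norm y)" using p by simp
            qed
            finally show ?thesis unfolding t_def .
          qed
          then have "a' * (t y - c) \<le> a' * t x" using ar0 by (intro mult_left_mono) auto
          then show ?thesis using A by (meson ereal_less_eq(3) le_less order.strict_trans1)
        qed
        have IL: "ereal (a' * (t y - c)) \<le> I y" unfolding I_def by (rule INF_greatest) (rule lowx)
        have ty: "t y > 0" using tpos y y2 by auto
        have F1: "ereal (a' * (t y - c) / t y) \<le> I y / ereal (t y)"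
          using IL ty by (subst ereal_le_divide_pos) auto
        have F2: "ar < a' * (t y - c) / t y"
        proof -
          have "a' - ar > 0" using ar0 by simp
          then have "K * (a' - ar) = a' * c" unfolding K_def by simp
          moreover have "t y * (a' - ar) > K * (a' - ar)" using tK \<open>a' - ar > 0\<close> by simp
          ultimately have "ar * t y < a' * (t y - c)" by (simp add: algebra_simps)
          then show ?thesis using ty by (simp add: field_simps)
        qed
        have "ereal ar < ereal (a' * (t y - c) / t y)" using F2 by simp
        then show "a < I y / ereal (t y)" unfolding ar using F1 by (rule less_le_trans)
      qed
    qed
  next
    fix b assume b: "\<gamma> < b"
    obtain c2 where c2: "\<gamma> < ereal c2" "ereal c2 < b" using ereal_dense2[OF b] by blast
    obtain c1 where c1: "\<gamma> < ereal c1" "ereal c1 < ereal c2" using ereal_dense2[OF c2(1)] by blast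
    have c1p: "0 < c1" using \<gamma>0 c1(1) by (metis ereal_less(2) le_less_trans zero_ereal_def)
    have c12: "c1 < c2" using c1(2) by simp
    obtain x0 :: 'a where x0: "0 < norm x0" "norm x0 < 1/2" "f x0 < ereal c1"
    proof (rule ccontr)
      assume "\<not> thesis"
      then have H: "\<And>x::'a. 0 < norm x \<Longrightarrow> norm x < 1/2 \<Longrightarrow> ereal c1 \<le> f x"
        using that not_less by blast
      have "eventually (\<lambda>x. ereal c1 \<le> f x) (at 0)" by (rule ev_at0[of "1/2"]) (use H in auto)
      then have "ereal c1 \<le> \<gamma>" unfolding \<gamma>_def by (rule Liminf_bounded)
      then show False using c1(1) by simp
    qed
    define m where "m = norm x0"
    define t0 where "t0 = t x0"
    have t0p: "t0 > 0" unfolding t0_def using tpos x0 by simp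
    have "w x0 < ereal c1 * ereal t0"
      using x0(3) t0p unfolding f_def t0_def[symmetric] by (subst (asm) ereal_divide_less_iff) auto
    moreover have "0 \<le> w x0" using wB x0 by simp
    ultimately obtain a0 where a0: "w x0 = ereal a0" "0 \<le> a0" "a0 < c1 * t0"
      by (cases "w x0") auto
    have a0c2: "a0 < c2 * t0"
      using a0(3) c12 t0p by (smt (verit) mult_strict_right_mono)
    define k where "k = ln (2 / \<alpha>)"
    have k0: "k > 0" unfolding k_def using \<alpha> by simp
    define E where "E r = c2 * (ln (1 / r) / (ln (1 / r) + k)) * ln (1 / (m + r))" for r :: real
    have L1: "((\<lambda>r::real. ln (1 / r) / (ln (1 / r) + k)) \<longlongrightarrow> 1) (at_right 0)" by real_asymp
    have L2: "((\<lambda>r::real. ln (1 / (m + r))) \<longlongrightarrow> ln (1 / (m + 0))) (at_right 0)"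
      using x0 unfolding m_def by (intro tendsto_intros) auto
    have "(E \<longlongrightarrow> c2 * 1 * ln (1 / (m + 0))) (at_right 0)"
      unfolding E_def using tendsto_mult[OF tendsto_mult[OF tendsto_const[of c2] L1] L2] .
    then have "(E \<longlongrightarrow> c2 * t0) (at_right 0)" unfolding t0_def t_def m_def by simp
    from order_tendstoD(1)[OF this a0c2]
    obtain r0 where r0: "r0 > 0" "\<And>r. 0 < r \<Longrightarrow> r < r0 \<Longrightarrow> a0 < E r"
      unfolding eventually_at_right_field by auto
    define d where "d = min r0 (m / 2)"
    have d0: "d > 0" unfolding d_def m_def using r0 x0 by simp
    show "eventually (\<lambda>y. I y / ereal (t y) < b) (at 0)"
    proof (rule ev_at0[OF d0])
      fix y :: 'a assume y: "0 < norm y" "norm y < d"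
      define r where "r = norm y"
      have r: "0 < r" "r < r0" "r < m / 2" using y unfolding r_def d_def by auto
      have m2: "m < 1/2" "0 < m" using x0 unfolding m_def by auto
      have ty: "t y > 0" using tpos y r m2 unfolding r_def by auto
      have "I y / ereal (t y) < ereal c2"
      proof (rule ccontr)
        assume "\<not> I y / ereal (t y) < ereal c2"
        then have "ereal c2 \<le> I y / ereal (t y)" by simp
        then have "ereal (t y) * ereal c2 \<le> I y" using ty by (subst (asm) ereal_le_divide_pos) auto
        then have LI: "ereal (c2 * t y) \<le> I y" by (simp add: mult.commute)
        define L where "L = c2 * t y"
        define \<rho> where "\<rho> = \<alpha> * r / 2"
        have ar1: "\<alpha> * r < 1 * r" using \<alpha> r by (intro mult_strict_right_mono) auto
        have \<rho>3: "\<rho> < r" unfolding \<rho>_def using ar1 r by linarith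
        have \<rho>1: "0 < \<rho>" unfolding \<rho>_def using \<alpha> r by simp
        have \<rho>2: "\<rho> < 1" using \<rho>3 r m2 by linarith
        note \<rho> = \<rho>1 \<rho>2 \<rho>3
        have L0: "0 \<le> L" unfolding L_def using c1p c12 ty by simp
        have Lb: "ereal L \<le> w x" if "x \<in> cball y \<rho>" for x
        proof -
          have "dist y x \<le> \<rho>" using that by simp
          moreover have "\<rho> < \<alpha> * norm y" unfolding \<rho>_def r_def using \<alpha> y by simp
          ultimately have "x \<in> ball y (\<alpha> * norm y)" by simp
          then have "I y \<le> w x" unfolding I_def by (rule INF_lower)
          then show ?thesis using LI unfolding L_def by simp
        qed
        have dxy: "m - r \<le> norm (x0 - y)" "norm (x0 - y) \<le> m + r"
          using norm_triangle_ineq2[of x0 y] norm_triangle_ineq4[of x0 y] unfolding m_def r_def by auto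
        have x0y: "\<rho> < norm (x0 - y)" "norm (x0 - y) < 1" using dxy \<rho> r m2 by auto
        have "ereal (L * ln (1 / norm (x0 - y)) / ln (1 / \<rho>)) \<le> w x0"
          by (rule barrier[OF n2 sh w0 \<rho>(1,2) _ L0 Lb x0y]) (use r m2 y in \<open>simp add: r_def\<close>)
        then have B: "L * ln (1 / norm (x0 - y)) / ln (1 / \<rho>) \<le> a0" using a0 by simp
        have lr: "ln (1 / \<rho>) = t y + k"
          unfolding \<rho>_def t_def k_def r_def using \<alpha> y by (simp add: ln_div ln_mult)
        have l1: "ln (1 / (m + r)) \<le> ln (1 / norm (x0 - y))"
        proof (rule ln_mono)
          have p: "0 < norm (x0 - y)" using x0y \<rho> by linarith
          have "0 < (m + r) * norm (x0 - y)" using p m2 r by simp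
          then show "1 / (m + r) \<le> 1 / norm (x0 - y)" using dxy p by (intro divide_left_mono) auto
          show "0 < 1 / (m + r)" using m2 r by simp
        qed
        have "E r = L * ln (1 / (m + r)) / ln (1 / \<rho>)"
        proof -
          have "t y = ln (1 / r)" by (simp add: t_def r_def)
          then show ?thesis unfolding E_def L_def lr by simp
        qed
        also have "\<dots> \<le> L * ln (1 / norm (x0 - y)) / ln (1 / \<rho>)"
          using l1 L0 ty k0 lr by (intro divide_right_mono mult_left_mono) auto
        finally have "E r \<le> a0" using B by simp
        then show False using r0(2)[OF r(1,2)] by simp
      qed
      then show "I y / ereal (t y) < b" using c2(2) by simp
    qed
  qed
  then show ?thesis unfolding I_def t_def \<gamma>_def f_def .
qed

end
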